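(* The normalizer of $\widehat{\operatorname{PC}^{+}_{\mathrm{rc}}}$ in $\widehat{\operatorname{PC}^{\bowtie}}$ is $\widehat{\operatorname{PC}^{+}_{\mathrm{rc}}}$.
   Context: $X=[0,1[$. $\widehat{\operatorname{PC}^{\bowtie}}$ is the group of bijections $X\to X$ continuous outside a finite subset; $\widehat{\operatorname{PC}^{+}}$ is the subgroup of those $h$ for which there is a finite partition of $X$ into intervals $[a,b[$ with $h$ continuous and increasing on each $]a,b[$; $\widehat{\operatorname{PC}^{+}_{\mathrm{rc}}}$ is the subgroup of right-continuous elements of $\widehat{\operatorname{PC}^{+}}$. *)

theory Defs
  imports "HOL-Analysis.Analysis"
begin

text \<open>The interval X = [0,1[. Bijections of X are represented as functions
  real \<Rightarrow> real that are bijective on X and equal to the identity outside X,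
  so that composition and the group inverse are the usual ones.\<close>

definition XI :: "real set" where
  "XI = {0..<1}"

definition bijX :: "(real \<Rightarrow> real) set" where
  "bijX = {f. bij_betw f XI XI \<and> (\<forall>x. x \<notin> XI \<longrightarrow> f x = x)}"

definition invX :: "(real \<Rightarrow> real) \<Rightarrow> (real \<Rightarrow> real)" where
  "invX g = (\<lambda>y. if y \<in> XI then inv_into XI g y else y)"

definition PC_bowtie :: "(real \<Rightarrow> real) set" where
  "PC_bowtie = {f \<in> bijX. \<exists>F. finite F \<and>
      (\<forall>x \<in> XI - F. continuous (at x within XI) f)}"

definition PC_plus :: "(real \<Rightarrow> real) set" where
  "PC_plus = {f \<in> PC_bowtie. \<exists>(p :: nat \<Rightarrow> real) (n :: nat).
      p 0 = 0 \<and> p n = 1 \<and> (\<forall>i<n. p i < p (Suc i)) \<and>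
      (\<forall>i<n. continuous_on {p i<..<p (Suc i)} f \<and> mono_on {p i<..<p (Suc i)} f)}"

definition PC_plus_rc :: "(real \<Rightarrow> real) set" where
  "PC_plus_rc = {f \<in> PC_plus. \<forall>x \<in> XI. continuous (at_right x) f}"

definition normalizerX :: "(real \<Rightarrow> real) set \<Rightarrow> (real \<Rightarrow> real) set \<Rightarrow> (real \<Rightarrow> real) set" where
  "normalizerX G H = {g \<in> G. (\<lambda>h. g \<circ> h \<circ> invX g) ` H = H}"

end

theory Submission
  imports Defs
begin

lemma bijX_inj: "f \<in> bijX \<Longrightarrow> inj_on f XI"
  by (auto simp: bijX_def bij_betw_def)
lemma bijX_in: "f \<in> bijX \<Longrightarrow> x \<in> XI \<Longrightarrow> f x \<in> XI"
  by (auto simp: bijX_def bij_betw_def)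
lemma bijX_out: "f \<in> bijX \<Longrightarrow> x \<notin> XI \<Longrightarrow> f x = x"
  by (auto simp: bijX_def)
lemma bijX_img: "f \<in> bijX \<Longrightarrow> f ` XI = XI"
  by (auto simp: bijX_def bij_betw_def)
lemma invX_f: "f \<in> bijX \<Longrightarrow> x \<in> XI \<Longrightarrow> invX f (f x) = x"
  using bijX_in[of f x] bijX_inj[of f] by (simp add: invX_def inv_into_f_f)
lemma f_invX: "f \<in> bijX \<Longrightarrow> y \<in> XI \<Longrightarrow> f (invX f y) = y"
  using bijX_img[of f] by (simp add: invX_def f_inv_into_f)
lemma invX_in: "f \<in> bijX \<Longrightarrow> y \<in> XI \<Longrightarrow> invX f y \<in> XI"
  using bijX_img[of f] by (auto simp: invX_def inv_into_into)
lemma comp_invX: "f \<in> bijX \<Longrightarrow> f \<circ> invX f = id"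
proof (rule ext)
  fix y assume f: "f \<in> bijX"
  show "(f \<circ> invX f) y = id y"
  proof (cases "y \<in> XI")
    case True then show ?thesis using f_invX[OF f True] by simp
  next
    case False then show ?thesis by (simp add: invX_def bijX_out[OF f])
  qed
qed
lemma invX_comp: "f \<in> bijX \<Longrightarrow> invX f \<circ> f = id"
proof (rule ext)
  fix y assume f: "f \<in> bijX"
  show "(invX f \<circ> f) y = id y"
  proof (cases "y \<in> XI")
    case True then show ?thesis using invX_f[OF f True] by simp
  next
    case False then show ?thesis by (simp add: invX_def bijX_out[OF f])
  qed
qed
lemma bijX_comp: "f \<in> bijX \<Longrightarrow> g \<in> bijX \<Longrightarrow> f \<circ> g \<in> bijX"
  unfolding bijX_def by (auto intro: bij_betw_trans)
lemma bijX_invX: "f \<in> bijX \<Longrightarrow> invX f \<in> bijX"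
proof -
  assume f: "f \<in> bijX"
  have "bij_betw (inv_into XI f) XI XI" using f by (auto simp: bijX_def intro: bij_betw_inv_into)
  then have "bij_betw (invX f) XI XI" by (rule bij_betw_cong[THEN iffD1, rotated]) (auto simp: invX_def)
  then show ?thesis by (auto simp: bijX_def invX_def)
qed

lemma gap_right: "finite C \<Longrightarrow> \<exists>e>0. \<forall>c\<in>C. \<not> (x < c \<and> c < x + (e::real))"
proof (induction rule: finite_induct)
  case empty then show ?case by (intro exI[of _ 1]) auto
next
  case (insert c C)
  then obtain e where "e > 0" "\<forall>c\<in>C. \<not> (x < c \<and> c < x + e)" by auto
  then show ?case by (intro exI[of _ "if x < c then min e (c - x) else e"]) auto
qed

lemma gap_left: "finite C \<Longrightarrow> \<exists>e>0. \<forall>c\<in>C. \<not> (x - e < c \<and> c < (x::real))"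
proof (induction rule: finite_induct)
  case empty then show ?case by (intro exI[of _ 1]) auto
next
  case (insert c C)
  then obtain e where "e > 0" "\<forall>c\<in>C. \<not> (x - e < c \<and> c < x)" by auto
  then show ?case by (intro exI[of _ "if c < x then min e (x - c) else e"]) auto
qed

definition goodC :: "real set \<Rightarrow> (real \<Rightarrow> real) \<Rightarrow> bool" where
  "goodC C f \<longleftrightarrow> finite C \<and> 0 \<in> C \<and> (\<forall>x y. 0 \<le> x \<longrightarrow> x < y \<longrightarrow> y < 1 \<longrightarrow>
     (\<forall>c\<in>C. \<not> (x < c \<and> c \<le> y)) \<longrightarrow> continuous_on {x..y} f \<and> strict_mono_on {x..y} f)"

lemma goodCD:
  assumes "goodC C f" "0 \<le> x" "x < y" "y < 1" "\<And>c. c \<in> C \<Longrightarrow> \<not> (x < c \<and> c \<le> y)"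
  shows "continuous_on {x..y} f" "strict_mono_on {x..y} f"
  using assms unfolding goodC_def by blast+

lemma smo_le: "strict_mono_on A (g::real\<Rightarrow>real) \<Longrightarrow> r \<in> A \<Longrightarrow> s \<in> A \<Longrightarrow> r \<le> s \<Longrightarrow> g r \<le> g s"
  by (cases "r = s") (auto dest: strict_mono_onD)

lemma smo_img: "strict_mono_on {a..b} (g::real\<Rightarrow>real) \<Longrightarrow> a \<le> b \<Longrightarrow> g ` {a..b} \<subseteq> {g a..g b}"
  using smo_le[of "{a..b}" g] by fastforce

lemma XI_iff: "x \<in> XI \<longleftrightarrow> 0 \<le> x \<and> x < 1" by (simp add: XI_def)

lemma goodC_comp:
  assumes f: "f \<in> bijX" and g: "g \<in> bijX" and gf: "goodC Cf f" and gg: "goodC Cg g"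
  shows "goodC (Cg \<union> invX g ` Cf) (f \<circ> g)"
proof -
  have fin: "finite (Cg \<union> invX g ` Cf)" using gf gg by (auto simp: goodC_def)
  have z: "0 \<in> Cg \<union> invX g ` Cf" using gg by (auto simp: goodC_def)
  have main: "continuous_on {a..b} (f \<circ> g) \<and> strict_mono_on {a..b} (f \<circ> g)"
    if a: "0 \<le> a" "a < b" "b < 1" and nc: "\<forall>c\<in>Cg \<union> invX g ` Cf. \<not> (a < c \<and> c \<le> b)" for a b
  proof -
    have gc: "continuous_on {a..b} g" and gm: "strict_mono_on {a..b} g"
      using goodCD[OF gg a] nc by auto
    have ab: "g a < g b" using strict_mono_onD[OF gm] a by auto
    have ga: "0 \<le> g a" and gb: "g b < 1" using bijX_in[OF g, of a] bijX_in[OF g, of b] a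
      by (auto simp: XI_iff)
    have nc2: "\<not> (g a < c \<and> c \<le> g b)" if c: "c \<in> Cf" for c
    proof
      assume h: "g a < c \<and> c \<le> g b"
      then obtain t where t: "a \<le> t" "t \<le> b" "g t = c" using IVT'[of g a c b] gc a by auto
      have tX: "t \<in> XI" using t a by (auto simp: XI_iff)
      have "t \<noteq> a" using t h by auto
      moreover have "invX g c = t" using invX_f[OF g tX] t by simp
      ultimately show False using nc c t by force
    qed
    have fc: "continuous_on {g a..g b} f" and fm: "strict_mono_on {g a..g b} f"
      using goodCD[OF gf ga ab gb] nc2 by auto
    have img: "g ` {a..b} \<subseteq> {g a..g b}" using smo_img[OF gm] a by simp
    have "continuous_on {a..b} (f \<circ> g)"
      by (rule continuous_on_compose[OF gc continuous_on_subset[OF fc img]])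
    moreover have "strict_mono_on {a..b} (f \<circ> g)"
    proof (rule strict_mono_onI)
      fix r s assume rs: "r \<in> {a..b}" "s \<in> {a..b}" "r < s"
      then have "g r < g s" using strict_mono_onD[OF gm] by auto
      moreover have "g r \<in> {g a..g b}" "g s \<in> {g a..g b}" using img rs(1,2) by (meson image_subset_iff)+
      ultimately show "(f \<circ> g) r < (f \<circ> g) s" using strict_mono_onD[OF fm] by auto
    qed
    ultimately show ?thesis by simp
  qed
  show ?thesis unfolding goodC_def using fin z main by blast
qed

lemma goodC_inv:
  assumes g: "g \<in> bijX" and gg: "goodC C g"
  shows "goodC (g ` C \<union> {0}) (invX g)"
proof -
  have finC: "finite C" and C0: "0 \<in> C" using gg by (auto simp: goodC_def)
  have main: "continuous_on {a..b} (invX g) \<and> strict_mono_on {a..b} (invX g)"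
    if a: "0 \<le> a" "a < b" "b < 1" and nc: "\<forall>c\<in>g ` C \<union> {0}. \<not> (a < c \<and> c \<le> b)" for a b
  proof -
    have aX: "a \<in> XI" and bX: "b \<in> XI" using a by (auto simp: XI_iff)
    define x where "x = invX g a"
    have xX: "x \<in> XI" and gx: "g x = a" using invX_in[OF g aX] f_invX[OF g aX] by (auto simp: x_def)
    define c1 where "c1 = Min (insert 1 {c\<in>C. x < c})"
    have finc: "finite (insert 1 {c\<in>C. x < c})" using finC by auto
    have c1x: "x < c1" unfolding c1_def using finc xX by (auto simp: Min_gr_iff XI_iff)
    have c1le: "c1 \<le> 1" unfolding c1_def using finc by (auto intro: Min_le)
    have c1C: "c1 = 1 \<or> c1 \<in> C" using Min_in[OF finc] unfolding c1_def by auto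
    have noC: "\<not> (x < c \<and> c < c1)" if "c \<in> C" for c
      using that Min_le[OF finc, of c] unfolding c1_def by auto
    have good_x: "continuous_on {x..t} g \<and> strict_mono_on {x..t} g" if "x < t" "t < c1" for t
      using goodCD[OF gg, of x t] that noC xX c1le by (force simp: XI_iff)+
    have ex_y: "\<exists>y. x < y \<and> y < c1 \<and> g y = b"
    proof (rule ccontr)
      assume ny: "\<not> ?thesis"
      have lt: "g t < b" if t: "x \<le> t" "t < c1" for t
      proof (rule ccontr)
        assume nt: "\<not> g t < b"
        then have xt: "x < t" using t gx a by (cases "t = x") auto
        then obtain y where y: "x \<le> y" "y \<le> t" "g y = b"
          using IVT'[of g x b t] good_x[OF xt t(2)] nt gx a by auto
        then have "y \<noteq> x" using gx a by auto
        then show False using ny y t by auto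
      qed
      define V where "V = g ` {x..<c1}"
      have Vne: "V \<noteq> {}" using c1x by (auto simp: V_def)
      have bdd: "bdd_above V"
      proof -
        have "\<forall>v\<in>V. v \<le> b"
        proof
          fix v assume "v \<in> V"
          then obtain t where "t \<in> {x..<c1}" "v = g t" by (auto simp: V_def)
          then show "v \<le> b" using lt[of t] by simp
        qed
        then show ?thesis by (auto simp: bdd_above_def)
      qed
      define L where "L = Sup V"
      have Lb: "L \<le> b" unfolding L_def using Vne proof (intro cSup_least)
        fix v assume "v \<in> V"
        then obtain t where "t \<in> {x..<c1}" "v = g t" by (auto simp: V_def)
        then show "v \<le> b" using lt[of t] by simp
      qed
      have ltL: "g t < L" if t: "x \<le> t" "t < c1" for t
      proof -
        define t' where "t' = (t + c1) / 2"
        have t': "x < t'" "t' < c1" "t < t'" using t by (auto simp: t'_def)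
        have "g t < g t'" using strict_mono_onD[OF conjunct2[OF good_x[OF t'(1,2)]]] t t' by auto
        moreover have "g t' \<le> L" unfolding L_def using bdd t' by (intro cSup_upper) (auto simp: V_def)
        ultimately show ?thesis by simp
      qed
      have aL: "a < L" using ltL[of x] c1x gx by auto
      have LX: "L \<in> XI" using aL Lb a by (auto simp: XI_iff)
      define z where "z = invX g L"
      have zX: "z \<in> XI" and gz: "g z = L" using invX_in[OF g LX] f_invX[OF g LX] by (auto simp: z_def)
      have znot: "\<not> (x \<le> z \<and> z < c1)" using ltL gz by force
      have zC: "z \<in> C"
      proof (rule ccontr)
        assume zn: "z \<notin> C"
        have z0: "0 < z" using zX zn C0 by (cases "z = 0") (auto simp: XI_iff)
        obtain e where e: "e > 0" "\<forall>c\<in>C. \<not> (z - e < c \<and> c < z)" using gap_left[OF finC] by blast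
        have zside: "z < x \<or> c1 < z"
        proof -
          have "z \<noteq> c1" using c1C zn zX by (auto simp: XI_iff)
          then show ?thesis using znot by auto
        qed
        define e2 where "e2 = (if z < x then min e z / 2 else min (min e z) (z - c1) / 2)"
        have e2: "0 < e2" "e2 < e" "e2 < z" "\<not> z < x \<Longrightarrow> e2 < z - c1"
          using e z0 zside by (auto simp: e2_def)
        have h1: "0 \<le> z - e2" "z - e2 < z" "z < 1" using e2 zX by (auto simp: XI_iff)
        have h2: "\<not> (z - e2 < c \<and> c \<le> z)" if "c \<in> C" for c
        proof
          assume "z - e2 < c \<and> c \<le> z"
          moreover have "c \<noteq> z" using that zn by auto
          ultimately show False using e(2) that e2(2) by force
        qed
        have gz2: "continuous_on {z-e2..z} g" "strict_mono_on {z-e2..z} g"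
          using goodCD[OF gg h1 h2] by auto
        have zin: "z \<in> {z-e2..z}" using e2 by auto
        have "\<exists>d>0. \<forall>w\<in>{z-e2..z}. dist w z < d \<longrightarrow> dist (g w) (g z) < L - a"
          using gz2(1) zin aL unfolding continuous_on_iff by simp
        then obtain d where d: "d > 0" "\<forall>w\<in>{z-e2..z}. dist w z < d \<longrightarrow> dist (g w) (g z) < L - a"
          by blast
        define w where "w = z - min d e2 / 2"
        have w: "w \<in> {z-e2..z}" "dist w z < d" "w < z"
          using d e2 by (auto simp: w_def dist_real_def)
        have gwa: "g w > a" using d(2) w gz by (auto simp: dist_real_def)
        have gwL: "g w < L" using strict_mono_onD[OF gz2(2)] w e2 gz by auto
        have wout: "\<not> (x \<le> w \<and> w < c1)" using zside w e2 by (auto simp: w_def)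
        have wX: "w \<in> XI" using w e2 zX by (auto simp: XI_iff)
        obtain t where t: "x \<le> t" "t < c1" "g w < g t"
          using gwL Vne bdd unfolding L_def by (auto simp: less_cSup_iff V_def)
        have xt: "x < t" using t gwa gx by (cases "t = x") auto
        obtain s where s: "x \<le> s" "s \<le> t" "g s = g w"
          using IVT'[of g x "g w" t] good_x[OF xt t(2)] t gwa gx by auto
        have sX: "s \<in> XI" using s t xX c1le by (auto simp: XI_iff)
        have "s = w" using bijX_inj[OF g] sX wX s(3) by (auto dest: inj_onD)
        then show False using s t wout by auto
      qed
      then show False using nc gz aL Lb by force
    qed
    then obtain y where y: "x < y" "y < c1" "g y = b" by blast
    have gc: "continuous_on {x..y} g" and gm: "strict_mono_on {x..y} g" using good_x[OF y(1,2)] by auto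
    have img: "g ` {x..y} = {a..b}"
    proof
      show "g ` {x..y} \<subseteq> {a..b}" using smo_img[OF gm] y gx by auto
      show "{a..b} \<subseteq> g ` {x..y}"
      proof
        fix v assume v: "v \<in> {a..b}"
        then obtain s where "x \<le> s" "s \<le> y" "g s = v" using IVT'[of g x v y] gc y gx by auto
        then show "v \<in> g ` {x..y}" by auto
      qed
    qed
    have inv_id: "\<forall>t\<in>{x..y}. invX g (g t) = t"
      using invX_f[OF g] xX y c1le by (auto simp: XI_iff)
    have "continuous_on {a..b} (invX g)"
      using continuous_on_inv[OF gc compact_Icc inv_id] img by simp
    moreover have "strict_mono_on {a..b} (invX g)"
    proof (rule strict_mono_onI)
      fix r s assume rs: "r \<in> {a..b}" "s \<in> {a..b}" "r < s"
      obtain r' where r': "r' \<in> {x..y}" "r = g r'" using rs(1) img by (metis imageE)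
      obtain s' where s': "s' \<in> {x..y}" "s = g s'" using rs(2) img by (metis imageE)
      have "r' < s'"
      proof (rule ccontr)
        assume "\<not> r' < s'"
        then have "g s' \<le> g r'" using smo_le[OF gm s'(1) r'(1)] by simp
        then show False using rs r' s' by simp
      qed
      then show "invX g r < invX g s" using inv_id r' s' by simp
    qed
    ultimately show ?thesis by simp
  qed
  show ?thesis unfolding goodC_def using finC main by auto
qed

lemma mono_chain: "(\<forall>i<n. p i < p (Suc i)) \<Longrightarrow> i < j \<Longrightarrow> j \<le> n \<Longrightarrow> p i < (p j :: real)"
proof (induction j)
  case 0 then show ?case by simp
next
  case (Suc j)
  then show ?case by (cases "i = j") (auto intro: less_trans)
qed

lemma mono_chain_le: "(\<forall>i<n. p i < p (Suc i)) \<Longrightarrow> i \<le> j \<Longrightarrow> j \<le> n \<Longrightarrow> p i \<le> (p j :: real)"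
  using mono_chain[of n p i j] by (cases "i = j") auto

lemma chain_gap: "(\<forall>i<n. p i < p (Suc i)) \<Longrightarrow> i < n \<Longrightarrow> j \<le> n \<Longrightarrow> \<not> (p i < p j \<and> p j < (p (Suc i) :: real))"
proof
  assume ch: "\<forall>i<n. p i < p (Suc i)" and i: "i < n" and j: "j \<le> n" and h: "p i < p j \<and> p j < p (Suc i)"
  show False
  proof (cases "j \<le> i")
    case True then show False using mono_chain_le[OF ch True] i h by auto
  next
    case False then have "Suc i \<le> j" by simp
    then show False using mono_chain_le[OF ch _ j] h by fastforce
  qed
qed

lemma cover:
  assumes "p 0 = 0" "p n = 1" "\<forall>i<n. p i < p (Suc i)" "0 \<le> a" "a < (1::real)"
  shows "\<exists>i<n. p i \<le> a \<and> a < p (Suc i)"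
proof -
  define S where "S = {i. i \<le> n \<and> p i \<le> a}"
  have fin: "finite S" unfolding S_def by auto
  have ne: "0 \<in> S" using assms by (auto simp: S_def)
  define i where "i = Max S"
  have iS: "i \<in> S" using Max_in[OF fin] ne by (auto simp: i_def)
  have "i \<noteq> n" using iS assms by (auto simp: S_def)
  then have ilt: "i < n" using iS by (auto simp: S_def)
  have "a < p (Suc i)"
  proof (rule ccontr)
    assume "\<not> a < p (Suc i)"
    then have "Suc i \<in> S" using ilt by (auto simp: S_def)
    then show False using Max_ge[OF fin, of "Suc i"] by (auto simp: i_def)
  qed
  then show ?thesis using ilt iS by (auto simp: S_def)
qed

lemma partition_exists:
  assumes "finite C"
  shows "\<exists>p n. p 0 = 0 \<and> p n = (1::real) \<and> (\<forall>i<n. p i < p (Suc i)) \<and>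
           (\<forall>c\<in>C. 0 < c \<and> c < 1 \<longrightarrow> (\<exists>j\<le>n. p j = c))"
proof -
  define C0 where "C0 = insert 0 (insert 1 (C \<inter> {0<..<1}))"
  have fin: "finite C0" using assms by (auto simp: C0_def)
  define L where "L = sorted_list_of_set C0"
  have setL: "set L = C0" using fin by (simp add: L_def)
  have sw: "sorted_wrt (<) L" by (simp add: L_def)
  then have lt: "\<And>i j. i < j \<Longrightarrow> j < length L \<Longrightarrow> L ! i < L ! j" by (auto simp: sorted_wrt_iff_nth_less)
  have C01: "\<And>c. c \<in> C0 \<Longrightarrow> 0 \<le> c \<and> c \<le> 1" by (auto simp: C0_def)
  have inL: "\<And>i. i < length L \<Longrightarrow> L ! i \<in> C0" using setL nth_mem by blast
  define n where "n = length L - 1"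
  have "0 \<in> set L" "1 \<in> set L" using setL by (auto simp: C0_def)
  then obtain j0 j1 where j0: "j0 < length L" "L ! j0 = 0" and j1: "j1 < length L" "L ! j1 = 1"
    by (metis in_set_conv_nth)
  have len: "length L > 1"
  proof -
    have "j0 \<noteq> j1" using j0 j1 by auto
    then show ?thesis using j0 j1 by auto
  qed
  have p0: "L ! 0 = 0"
  proof (rule ccontr)
    assume "L ! 0 \<noteq> 0"
    then have "j0 \<noteq> 0" using j0 by (metis)
    then have "L ! 0 < L ! j0" using lt[of 0 j0] j0 by auto
    moreover have "L ! 0 \<in> C0" using inL[of 0] len by linarith
    ultimately show False using C01 j0 by fastforce
  qed
  have pn: "L ! n = 1"
  proof (rule ccontr)
    assume "L ! n \<noteq> 1"
    then have "j1 \<noteq> n" using j1 by auto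
    then have "j1 < n" using j1 by (auto simp: n_def)
    then have "L ! j1 < L ! n" using lt len by (auto simp: n_def)
    moreover have "L ! n \<in> C0" using inL[of n] len unfolding n_def by linarith
    ultimately show False using C01 j1 by fastforce
  qed
  have ch: "\<forall>i<n. L ! i < L ! (Suc i)" using lt by (auto simp: n_def)
  have cov: "\<forall>c\<in>C. 0 < c \<and> c < 1 \<longrightarrow> (\<exists>j\<le>n. L ! j = c)"
  proof (intro ballI impI)
    fix c assume "c \<in> C" "0 < c \<and> c < 1"
    then have "c \<in> set L" using setL by (auto simp: C0_def)
    then obtain j where "j < length L" "L ! j = c" by (metis in_set_conv_nth)
    then show "\<exists>j\<le>n. L ! j = c" by (intro exI[of _ j]) (auto simp: n_def)
  qed
  show ?thesis using p0 pn ch cov by blast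
qed

lemma endpoint_le:
  assumes rc: "continuous (at_right (a::real)) f" and m: "mono_on {a<..<c} f" and y: "a < y" "y < c"
  shows "f a \<le> (f y :: real)"
proof -
  have lim: "(f \<longlongrightarrow> f a) (at_right a)" using rc by (simp add: continuous_within)
  have "\<forall>t>a. t < y \<longrightarrow> f t \<le> f y" using y by (auto intro: mono_onD[OF m])
  then have ev: "eventually (\<lambda>t. f t \<le> f y) (at_right a)"
    unfolding eventually_at_right_field using y by blast
  show ?thesis using tendsto_upperbound[OF lim ev] by simp
qed

lemma H_to_good:
  assumes f: "f \<in> PC_plus_rc"
  shows "f \<in> bijX \<and> (\<exists>C. goodC C f)"
proof -
  have fb: "f \<in> bijX" and rc: "\<forall>x\<in>XI. continuous (at_right x) f"
    using f by (auto simp: PC_plus_rc_def PC_plus_def PC_bowtie_def)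
  obtain p n where p0: "p 0 = 0" and pn: "p n = 1" and ch: "\<forall>i<n. p i < p (Suc i)"
    and pc: "\<forall>i<n. continuous_on {p i<..<p (Suc i)} f \<and> mono_on {p i<..<p (Suc i)} f"
    using f by (auto simp: PC_plus_rc_def PC_plus_def)
  define C where "C = p ` {..n}"
  have main: "continuous_on {a..b} f \<and> strict_mono_on {a..b} f"
    if ab: "0 \<le> a" "a < b" "b < 1" and nc: "\<forall>c\<in>C. \<not> (a < c \<and> c \<le> b)" for a b
  proof -
    obtain i where i: "i < n" "p i \<le> a" "a < p (Suc i)" using cover[OF p0 pn ch ab(1)] ab by auto
    have bi: "b < p (Suc i)"
    proof (rule ccontr)
      assume "\<not> b < p (Suc i)"
      moreover have "p (Suc i) \<in> C" using i by (auto simp: C_def)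
      ultimately show False using nc i by force
    qed
    have co: "continuous_on {p i<..<p (Suc i)} f" and mo: "mono_on {p i<..<p (Suc i)} f" using pc i by auto
    have aX: "a \<in> XI" using ab by (auto simp: XI_iff)
    have "continuous_on {a..b} f" unfolding continuous_on_eq_continuous_within
    proof
      fix x assume x: "x \<in> {a..b}"
      show "continuous (at x within {a..b}) f"
      proof (cases "x = p i")
        case True
        then have "x = a" using x i by auto
        then show ?thesis using rc aX at_within_Icc_at_right[OF ab(2)] by simp
      next
        case False
        then have "x \<in> {p i<..<p (Suc i)}" using x i bi by auto
        then have "isCont f x" using co continuous_on_eq_continuous_at[OF open_greaterThanLessThan] by blast
        then show ?thesis by (rule continuous_at_imp_continuous_at_within)
      qed
    qed
    moreover have "strict_mono_on {a..b} f"
    proof (rule strict_mono_onI)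
      fix r s assume rs: "r \<in> {a..b}" "s \<in> {a..b}" "r < s"
      have sin: "s \<in> {p i<..<p (Suc i)}" using rs i bi by auto
      have le: "f r \<le> f s"
      proof (cases "r = p i")
        case True
        then show ?thesis using endpoint_le[OF _ mo, of s] rc aX rs i sin by auto
      next
        case False
        then have "r \<in> {p i<..<p (Suc i)}" using rs i bi by auto
        then show ?thesis using mono_onD[OF mo _ sin] rs by auto
      qed
      have "r \<in> XI" "s \<in> XI" using rs ab by (auto simp: XI_iff)
      then have "f r \<noteq> f s" using bijX_inj[OF fb] rs by (auto dest: inj_onD)
      then show "f r < f s" using le by simp
    qed
    ultimately show ?thesis by simp
  qed
  have "goodC C f" unfolding goodC_def using main p0 by (auto simp: C_def)
  then show ?thesis using fb by blast
qed

lemma good_to_H: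
  assumes fb: "f \<in> bijX" and gC: "goodC C f"
  shows "f \<in> PC_plus_rc"
proof -
  have finC: "finite C" and C0: "0 \<in> C" using gC by (auto simp: goodC_def)
  have bow: "f \<in> PC_bowtie"
    unfolding PC_bowtie_def
  proof (intro CollectI conjI exI[of _ C] ballI)
    show "f \<in> bijX" by (rule fb)
    show "finite C" by (rule finC)
    fix x assume x: "x \<in> XI - C"
    then have x0: "0 < x" "x < 1" using C0 by (auto simp: XI_iff) (metis less_eq_real_def)
    obtain e1 where e1: "e1 > 0" "\<forall>c\<in>C. \<not> (x - e1 < c \<and> c < x)" using gap_left[OF finC] by blast
    obtain e2 where e2: "e2 > 0" "\<forall>c\<in>C. \<not> (x < c \<and> c < x + e2)" using gap_right[OF finC] by blast
    define a where "a = x - min e1 x / 2"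
    define b where "b = x + min e2 (1 - x) / 2"
    have ab: "0 \<le> a" "a < x" "x < b" "b < 1" "x - e1 < a" "b < x + e2" using e1(1) e2(1) x0 unfolding a_def b_def min_def by (auto simp: field_simps)
    have nc: "\<not> (a < c \<and> c \<le> b)" if "c \<in> C" for c
    proof
      assume h: "a < c \<and> c \<le> b"
      have "c \<noteq> x" using x that by auto
      then have "c < x \<or> x < c" by auto
      then show False
      proof
        assume "c < x" then show False using e1(2) that h ab(5) by force
      next
        assume "x < c" then show False using e2(2) that h ab(6) by force
      qed
    qed
    have "continuous_on {a..b} f" using goodCD(1)[OF gC ab(1) _ ab(4) nc] ab by auto
    then have "isCont f x" using continuous_on_interior[of "{a..b}" f x] ab by auto
    then show "continuous (at x within XI) f" by (rule continuous_at_imp_continuous_at_within)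
  qed
  obtain p n where p0: "p 0 = 0" and pn: "p n = 1" and ch: "\<forall>i<n. p i < p (Suc i)"
    and pcov: "\<forall>c\<in>C. 0 < c \<and> c < 1 \<longrightarrow> (\<exists>j\<le>n. p j = c)"
    using partition_exists[OF finC] by blast
  have pr: "p j \<in> {0..1}" if "j \<le> n" for j
    using mono_chain_le[OF ch, of 0 j] mono_chain_le[OF ch, of j n] that p0 pn by auto
  have pieces: "continuous_on {p i<..<p (Suc i)} f \<and> mono_on {p i<..<p (Suc i)} f" if i: "i < n" for i
  proof -
    have pi: "0 \<le> p i" "p (Suc i) \<le> 1" using pr[of i] pr[of "Suc i"] i by auto
    have noc: "\<not> (p i < c \<and> c < p (Suc i))" if c: "c \<in> C" for c
    proof
      assume h: "p i < c \<and> c < p (Suc i)"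
      then obtain j where "j \<le> n" "p j = c" using pcov c pi by force
      then show False using chain_gap[OF ch i, of j] h by auto
    qed
    have "isCont f x" if x: "x \<in> {p i<..<p (Suc i)}" for x
    proof -
      define a where "a = (p i + x) / 2"
      define b where "b = (x + p (Suc i)) / 2"
      have ab: "0 \<le> a" "a < x" "x < b" "b < 1" "p i < a" "b < p (Suc i)" using x pi by (auto simp: a_def b_def)
      have nc: "\<not> (a < c \<and> c \<le> b)" if "c \<in> C" for c using noc[OF that] ab by auto
      have "continuous_on {a..b} f" using goodCD(1)[OF gC ab(1) _ ab(4) nc] ab by auto
      then show "isCont f x" using continuous_on_interior[of "{a..b}" f x] ab by auto
    qed
    then have "continuous_on {p i<..<p (Suc i)} f" by (intro continuous_at_imp_continuous_on) blast
    moreover have "mono_on {p i<..<p (Suc i)} f"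
    proof (rule mono_onI)
      fix r s assume rs: "r \<in> {p i<..<p (Suc i)}" "s \<in> {p i<..<p (Suc i)}" "r \<le> s"
      show "f r \<le> f s"
      proof (cases "r = s")
        case False
        then have rs': "r < s" using rs by auto
        have nc: "\<not> (r < c \<and> c \<le> s)" if "c \<in> C" for c using noc[OF that] rs by auto
        have "strict_mono_on {r..s} f" using goodCD(2)[OF gC _ rs' _ nc] rs pi by auto
        then show ?thesis using strict_mono_onD[of "{r..s}" f r s] rs' by auto
      qed simp
    qed
    ultimately show ?thesis by simp
  qed
  have plus: "f \<in> PC_plus" unfolding PC_plus_def using bow p0 pn ch pieces by blast
  have rc: "continuous (at_right x) f" if x: "x \<in> XI" for x
  proof -
    obtain e where e: "e > 0" "\<forall>c\<in>C. \<not> (x < c \<and> c < x + e)" using gap_right[OF finC] by blast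
    define b where "b = x + min e (1 - x) / 2"
    have xb: "0 \<le> x" "x < b" "b < 1" "b < x + e" using x e(1) unfolding b_def min_def by (auto simp: XI_iff field_simps)
    have nc: "\<not> (x < c \<and> c \<le> b)" if "c \<in> C" for c using e(2) that xb by force
    have "continuous_on {x..b} f" using goodCD(1)[OF gC xb(1,2,3) nc] by auto
    then have "continuous (at x within {x..b}) f" using xb unfolding continuous_on_eq_continuous_within by auto
    then show ?thesis using at_within_Icc_at_right[OF xb(2)] by simp
  qed
  show ?thesis unfolding PC_plus_rc_def using plus rc by blast
qed

lemma H_iff: "f \<in> PC_plus_rc \<longleftrightarrow> f \<in> bijX \<and> (\<exists>C. goodC C f)"
  using H_to_good good_to_H by blast

lemma H_comp: "f \<in> PC_plus_rc \<Longrightarrow> g \<in> PC_plus_rc \<Longrightarrow> f \<circ> g \<in> PC_plus_rc"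
  unfolding H_iff using goodC_comp bijX_comp by blast

lemma H_inv: "g \<in> PC_plus_rc \<Longrightarrow> invX g \<in> PC_plus_rc"
  unfolding H_iff using goodC_inv bijX_invX by blast

definition swp :: "real \<Rightarrow> real \<Rightarrow> real \<Rightarrow> real" where
  "swp u b t = (if u \<le> t \<and> t < (u + b) / 2 then t + (b - u) / 2
     else if (u + b) / 2 \<le> t \<and> t < b then t - (b - u) / 2 else t)"

lemma swp_id: "t < u \<or> b \<le> t \<Longrightarrow> u < b \<Longrightarrow> swp u b t = t"
  by (auto simp: swp_def)

lemma swp_u: "u < b \<Longrightarrow> swp u b u \<noteq> u"
  by (auto simp: swp_def)

lemma swp_invol: "u < b \<Longrightarrow> swp u b (swp u b t) = t"
  by (auto simp: swp_def field_simps)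

lemma swp_H:
  assumes ub: "0 \<le> u" "u < b" "b \<le> 1"
  shows "swp u b \<in> PC_plus_rc"
proof -
  have maps: "swp u b t \<in> XI" if "t \<in> XI" for t
    using that ub by (auto simp: swp_def XI_iff field_simps)
  have bij: "bij_betw (swp u b) XI XI"
  proof (rule bij_betw_byWitness[where f'="swp u b"])
    show "\<forall>a\<in>XI. swp u b (swp u b a) = a" "\<forall>a\<in>XI. swp u b (swp u b a) = a"
      using swp_invol[OF ub(2)] by blast+
    show "swp u b ` XI \<subseteq> XI" "swp u b ` XI \<subseteq> XI" using maps by blast+
  qed
  have out: "swp u b t = t" if "t \<notin> XI" for t
    using that ub by (intro swp_id) (auto simp: XI_iff)
  have fb: "swp u b \<in> bijX" using bij out by (auto simp: bijX_def)
  define m where "m = (u + b) / 2"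
  have gC: "goodC {0, u, m, b} (swp u b)"
    unfolding goodC_def
  proof (intro conjI allI impI)
    fix x y :: real assume xy: "0 \<le> x" "x < y" "y < 1" and nc: "\<forall>c\<in>{0, u, m, b}. \<not> (x < c \<and> c \<le> y)"
    have n1: "\<not> (x < u \<and> u \<le> y)" "\<not> (x < m \<and> m \<le> y)" "\<not> (x < b \<and> b \<le> y)" using nc by auto
    define k where "k = (if x < u then 0 else if x < m then (b - u) / 2 else if x < b then - (b - u) / 2 else 0)"
    have eq: "swp u b t = t + k" if t: "t \<in> {x..y}" for t
      using t n1 ub unfolding k_def swp_def m_def by (auto simp: field_simps)
    have "continuous_on {x..y} (\<lambda>t. t + k)" by (intro continuous_intros)
    moreover have "continuous_on {x..y} (swp u b) = continuous_on {x..y} (\<lambda>t. t + k)"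
      by (rule continuous_on_cong[OF refl eq])
    ultimately show "continuous_on {x..y} (swp u b)" by simp
    show "strict_mono_on {x..y} (swp u b)"
    proof (rule strict_mono_onI)
      fix r s assume "r \<in> {x..y}" "s \<in> {x..y}" "r < s"
      then show "swp u b r < swp u b s" using eq[of r] eq[of s] by simp
    qed
  qed simp_all
  show ?thesis using good_to_H[OF fb gC] .
qed

lemma keyP:
  assumes g: "g \<in> bijX" and sub: "PC_plus_rc \<subseteq> (\<lambda>h. g \<circ> h \<circ> invX g) ` PC_plus_rc"
    and x0: "x0 \<in> XI" and yb: "g x0 < b" "b \<le> 1" and d: "d > 0"
  shows "\<exists>x. x0 < x \<and> x < x0 + d \<and> g x0 < g x \<and> g x < b"
proof (rule ccontr)
  assume nx: "\<not> ?thesis"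
  define y0 where "y0 = g x0"
  have y0X: "y0 \<in> XI" using bijX_in[OF g x0] by (simp add: y0_def)
  have hH: "swp y0 b \<in> PC_plus_rc" using swp_H[of y0 b] y0X yb by (auto simp: XI_iff y0_def)
  then obtain k where kH: "k \<in> PC_plus_rc" and hk: "swp y0 b = g \<circ> k \<circ> invX g" using sub by blast
  have kb: "k \<in> bijX" using kH H_iff by blast
  have hk2: "swp y0 b (g x) = g (k x)" if "x \<in> XI" for x
    using hk invX_f[OF g that] by (metis comp_apply)
  have ev: "\<forall>x>x0. x < min (x0 + d) 1 \<longrightarrow> k x = x"
  proof (intro allI impI)
    fix x assume x: "x0 < x" "x < min (x0 + d) 1"
    have xX: "x \<in> XI" using x x0 by (auto simp: XI_iff)
    have gxX: "g x \<in> XI" using bijX_in[OF g xX] .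
    have "g x \<noteq> y0" using bijX_inj[OF g] xX x0 x unfolding y0_def by (auto dest: inj_onD)
    moreover have "\<not> (y0 < g x \<and> g x < b)" using nx x unfolding y0_def by auto
    ultimately have "g x < y0 \<or> b \<le> g x" by auto
    then have "swp y0 b (g x) = g x" using yb swp_id y0_def by auto
    then have "g (k x) = g x" using hk2[OF xX] by simp
    moreover have "k x \<in> XI" using bijX_in[OF kb xX] .
    ultimately show "k x = x" using bijX_inj[OF g] xX by (auto dest: inj_onD)
  qed
  have kx0: "k x0 \<noteq> x0"
  proof
    assume "k x0 = x0"
    then have "swp y0 b y0 = y0" using hk2[OF x0] by (simp add: y0_def)
    then show False using swp_u[of y0 b] yb by (simp add: y0_def)
  qed
  have "continuous (at_right x0) k" using kH x0 by (auto simp: PC_plus_rc_def)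
  then have l1: "(k \<longlongrightarrow> k x0) (at_right x0)" by (simp add: continuous_within)
  have evk: "eventually (\<lambda>x. x = k x) (at_right x0)"
    unfolding eventually_at_right_field using ev x0 d by (intro exI[of _ "min (x0 + d) 1"]) (auto simp: XI_iff)
  have l2: "(k \<longlongrightarrow> x0) (at_right x0)"
    by (rule Lim_transform_eventually[OF tendsto_ident_at evk])
  have "k x0 = x0" using tendsto_unique[OF trivial_limit_at_right_real l1 l2] .
  then show False using kx0 by simp
qed

lemma sup_mono:
  assumes c: "continuous_on {s..t} g" and st: "(s::real) \<le> t"
    and P: "\<And>x d. s \<le> x \<Longrightarrow> x < t \<Longrightarrow> d > 0 \<Longrightarrow> \<exists>y. x < y \<and> y < x + d \<and> g x < g y"
  shows "g s \<le> (g t :: real)"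
proof (rule ccontr)
  assume nt: "\<not> g s \<le> g t"
  define S where "S = {x \<in> {s..t}. g s \<le> g x}"
  have cl: "closed S"
  proof -
    have "closed {x \<in> {s..t}. (\<lambda>_. g s) x \<le> g x}"
      by (intro continuous_on_closed_Collect_le continuous_on_const c) simp
    then show ?thesis by (simp add: S_def)
  qed
  have ne: "S \<noteq> {}" using st by (auto simp: S_def)
  have bdd: "bdd_above S" unfolding bdd_above_def S_def by (intro exI[of _ t]) auto
  define \<sigma> where "\<sigma> = Sup S"
  have sS: "\<sigma> \<in> S" unfolding \<sigma>_def by (rule closed_contains_Sup[OF ne bdd cl])
  then have s1: "s \<le> \<sigma>" "\<sigma> \<le> t" "g s \<le> g \<sigma>" by (auto simp: S_def)
  have "\<sigma> \<noteq> t" using s1 nt by auto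
  then have st2: "\<sigma> < t" using s1 by simp
  obtain y where y: "\<sigma> < y" "y < \<sigma> + (t - \<sigma>)" "g \<sigma> < g y" using P[OF s1(1) st2, of "t - \<sigma>"] st2 by auto
  have "y \<in> S" using y s1 by (auto simp: S_def)
  then have "y \<le> \<sigma>" unfolding \<sigma>_def using bdd by (rule cSup_upper)
  then show False using y by simp
qed

lemma norm_sub:
  assumes gN: "g \<in> normalizerX PC_bowtie PC_plus_rc"
  shows "g \<in> PC_plus_rc"
proof -
  have gb: "g \<in> bijX" and sub: "PC_plus_rc \<subseteq> (\<lambda>h. g \<circ> h \<circ> invX g) ` PC_plus_rc"
    using gN by (auto simp: normalizerX_def PC_bowtie_def)
  obtain F where finF: "finite F" and cF: "\<forall>x \<in> XI - F. continuous (at x within XI) g"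
    using gN by (auto simp: normalizerX_def PC_bowtie_def)
  note P = keyP[OF gb sub]
  define C where "C = insert 0 F"
  have finC: "finite C" using finF by (simp add: C_def)
  have main: "continuous_on {a..b} g \<and> strict_mono_on {a..b} g"
    if ab: "0 \<le> a" "a < b" "b < 1" and nc: "\<forall>c\<in>C. \<not> (a < c \<and> c \<le> b)" for a b
  proof -
    have abX: "{a..b} \<subseteq> XI" using ab by (auto simp: XI_iff)
    have cab: "continuous (at x within {a..b}) g" if x: "a < x" "x \<le> b" for x
    proof -
      have "x \<in> XI - F" using x ab nc by (auto simp: C_def XI_iff)
      then have "continuous (at x within XI) g" using cF by blast
      then show ?thesis using continuous_within_subset abX by blast
    qed
    have Pw: "\<exists>y. x < y \<and> y < x + d \<and> g x < g y" if "x \<in> XI" "d > 0" for x d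
    proof -
      have "g x < 1" using bijX_in[OF gb that(1)] by (simp add: XI_iff)
      then show ?thesis using P[OF that(1) _ _ that(2), of 1] by auto
    qed
    have mono_sub: "g r \<le> g s" if rs: "a \<le> r" "r \<le> s" "s \<le> b" "continuous_on {r..s} g" for r s
    proof (rule sup_mono[OF rs(4) rs(2)])
      fix x d :: real assume "r \<le> x" "x < s" "d > 0"
      then show "\<exists>y. x < y \<and> y < x + d \<and> g x < g y" using Pw[of x d] rs ab by (auto simp: XI_iff)
    qed
    have cont_in: "continuous_on {r..s} g" if rs: "a < r" "s \<le> b" for r s
      unfolding continuous_on_eq_continuous_within
    proof
      fix x assume "x \<in> {r..s}"
      then have "continuous (at x within {a..b}) g" using cab rs by auto
      moreover have "{r..s} \<subseteq> {a..b}" using rs by auto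
      ultimately show "continuous (at x within {r..s}) g" using continuous_within_subset by blast
    qed
    have aX: "a \<in> XI" using ab by (auto simp: XI_iff)
    have rca: "(g \<longlongrightarrow> g a) (at_right a)"
      unfolding tendsto_iff
    proof (intro allI impI)
      fix e :: real assume e: "e > 0"
      obtain x1 where x1: "a < x1" "x1 < a + (b - a)" "g a < g x1" "g x1 < min (g a + e) 1"
        using P[OF aX, of "min (g a + e) 1" "b - a"] e ab bijX_in[OF gb aX] by (auto simp: XI_iff)
      have "\<forall>x>a. x < x1 \<longrightarrow> dist (g x) (g a) < e"
      proof (intro allI impI)
        fix x assume x: "a < x" "x < x1"
        have "g x \<le> g x1" using mono_sub[of x x1] cont_in[of x x1] x x1 by auto
        moreover obtain x' where x': "a < x'" "x' < a + (x - a)" "g a < g x'" "g x' < 1"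
          using P[OF aX, of 1 "x - a"] x bijX_in[OF gb aX] by (auto simp: XI_iff)
        moreover have "g x' \<le> g x" using mono_sub[of x' x] cont_in[of x' x] x' x x1 by auto
        ultimately show "dist (g x) (g a) < e" using x1 by (auto simp: dist_real_def)
      qed
      then show "eventually (\<lambda>x. dist (g x) (g a) < e) (at_right a)"
        unfolding eventually_at_right_field using x1 by blast
    qed
    have cont: "continuous_on {a..b} g" unfolding continuous_on_eq_continuous_within
    proof
      fix x assume x: "x \<in> {a..b}"
      show "continuous (at x within {a..b}) g"
      proof (cases "x = a")
        case True
        then show ?thesis using rca at_within_Icc_at_right[OF ab(2)] by (simp add: continuous_within)
      next
        case False then show ?thesis using cab x by auto
      qed
    qed
    have "strict_mono_on {a..b} g"
    proof (rule strict_mono_onI)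
      fix r s assume rs: "r \<in> {a..b}" "s \<in> {a..b}" "r < s"
      have "continuous_on {r..s} g" using continuous_on_subset[OF cont] rs by auto
      then have "g r \<le> g s" using mono_sub[of r s] rs by auto
      moreover have "r \<in> XI" "s \<in> XI" using rs abX by auto
      moreover have "g r \<noteq> g s" using bijX_inj[OF gb] calculation rs(3) by (auto dest: inj_onD)
      ultimately show "g r < g s" by simp
    qed
    then show ?thesis using cont by simp
  qed
  have "goodC C g" unfolding goodC_def using finC main by (auto simp: C_def)
  then show ?thesis using good_to_H[OF gb] by blast
qed

theorem proposition5p4:
  shows "normalizerX PC_bowtie PC_plus_rc = PC_plus_rc"
proof
  show "normalizerX PC_bowtie PC_plus_rc \<subseteq> PC_plus_rc" using norm_sub by blast
  show "PC_plus_rc \<subseteq> normalizerX PC_bowtie PC_plus_rc"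
  proof
    fix g assume gH: "g \<in> PC_plus_rc"
    have gb: "g \<in> bijX" using gH H_iff by blast
    have gB: "g \<in> PC_bowtie" using gH by (auto simp: PC_plus_rc_def PC_plus_def)
    have giH: "invX g \<in> PC_plus_rc" using H_inv[OF gH] .
    have "(\<lambda>h. g \<circ> h \<circ> invX g) ` PC_plus_rc = PC_plus_rc"
    proof
      show "(\<lambda>h. g \<circ> h \<circ> invX g) ` PC_plus_rc \<subseteq> PC_plus_rc"
        using H_comp gH giH by blast
      show "PC_plus_rc \<subseteq> (\<lambda>h. g \<circ> h \<circ> invX g) ` PC_plus_rc"
      proof
        fix h assume hH: "h \<in> PC_plus_rc"
        have kH: "invX g \<circ> h \<circ> g \<in> PC_plus_rc" using H_comp giH hH gH by blast
        have "g \<circ> (invX g \<circ> h \<circ> g) \<circ> invX g = (g \<circ> invX g) \<circ> h \<circ> (g \<circ> invX g)"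
          by (simp add: comp_assoc)
        also have "\<dots> = h" using comp_invX[OF gb] by simp
        finally show "h \<in> (\<lambda>h. g \<circ> h \<circ> invX g) ` PC_plus_rc" using kH by (metis image_eqI)
      qed
    qed
    then show "g \<in> normalizerX PC_bowtie PC_plus_rc" using gB by (simp add: normalizerX_def)
  qed
qed

end
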